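(* Let $k$ and $\ell$ be positive integers with $k\ge 3$. Then there exists a positive integer $N_2$ such that $px_{k,\ell}(K_{n,n})=2$ for every integer $n\ge N_2$.
   Context: All graphs are finite, simple and undirected; $K_{n,n}$ is the complete bipartite graph with both parts of size $n$. An edge-coloring of a graph may assign the same color to adjacent edges. A tree $T$ in an edge-colored graph is a proper tree if no two adjacent edges of $T$ receive the same color. For $S\subseteq V(G)$ with $|S|\ge 2$, an $S$-tree is a tree in $G$ containing all vertices of $S$. $S$-trees $T_1,\dots,T_\ell$ are internally disjoint if $E(T_i)\cap E(T_j)=\emptyset$ and $V(T_i)\cap V(T_j)=S$ for all $i\ne j$. For a connected graph $G$ of order $n$ and integers $k,\ell$ with $2\le k\le n$ and $1\le \ell\le \kappa_k(G)$ (where $\kappa_k(G)$ is the minimum, over all $k$-subsets $S$ of $V(G)$, of the maximum number of internally disjoint $S$-trees), the $(k,\ell)$-proper index $px_{k,\ell}(G)$ is the minimum number of colors in an edge-coloring of $G$ such that for every $k$-subset $S$ of $V(G)$ there exist $\ell$ internally disjoint proper $S$-trees. *)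

theory Defs
  imports Main
begin

type_synonym 'a ugraph = "'a set \<times> 'a set set"

definition verts :: "'a ugraph \<Rightarrow> 'a set" where "verts G = fst G"
definition edges :: "'a ugraph \<Rightarrow> 'a set set" where "edges G = snd G"

definition simple_graph :: "'a ugraph \<Rightarrow> bool" where
  "simple_graph G \<longleftrightarrow> finite (verts G) \<and>
     (\<forall>e\<in>edges G. \<exists>x y. x \<noteq> y \<and> e = {x, y} \<and> x \<in> verts G \<and> y \<in> verts G)"

definition connected_graph :: "'a ugraph \<Rightarrow> bool" where
  "connected_graph G \<longleftrightarrow> verts G \<noteq> {} \<and>
     (\<forall>u\<in>verts G. \<forall>v\<in>verts G. (u, v) \<in> {(x, y). {x, y} \<in> edges G}\<^sup>*)"

definition has_cycle :: "'a ugraph \<Rightarrow> bool" where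
  "has_cycle G \<longleftrightarrow> (\<exists>vs. length vs \<ge> 3 \<and> distinct vs \<and> set vs \<subseteq> verts G \<and>
     (\<forall>i < length vs. {vs ! i, vs ! ((i + 1) mod length vs)} \<in> edges G))"

definition subgraph :: "'a ugraph \<Rightarrow> 'a ugraph \<Rightarrow> bool" where
  "subgraph H G \<longleftrightarrow> verts H \<subseteq> verts G \<and> edges H \<subseteq> edges G \<and>
     (\<forall>e\<in>edges H. e \<subseteq> verts H)"

definition tree_in :: "'a ugraph \<Rightarrow> 'a ugraph \<Rightarrow> bool" where
  "tree_in T G \<longleftrightarrow> subgraph T G \<and> connected_graph T \<and> \<not> has_cycle T"

definition S_tree :: "'a ugraph \<Rightarrow> 'a set \<Rightarrow> 'a ugraph \<Rightarrow> bool" where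
  "S_tree G S T \<longleftrightarrow> tree_in T G \<and> S \<subseteq> verts T"

definition int_disjoint_S_trees ::
  "'a ugraph \<Rightarrow> 'a set \<Rightarrow> nat \<Rightarrow> (nat \<Rightarrow> 'a ugraph) \<Rightarrow> bool" where
  "int_disjoint_S_trees G S l T \<longleftrightarrow> (\<forall>i<l. S_tree G S (T i)) \<and>
     (\<forall>i<l. \<forall>j<l. i \<noteq> j \<longrightarrow>
        edges (T i) \<inter> edges (T j) = {} \<and> verts (T i) \<inter> verts (T j) = S)"

definition kappa :: "nat \<Rightarrow> 'a ugraph \<Rightarrow> nat" where
  "kappa k G = Min {Max {l. \<exists>T. int_disjoint_S_trees G S l T} | S. S \<subseteq> verts G \<and> card S = k}"

text \<open>Edge colourings (with colours in a set C, values on non-edges irrelevant);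
  proper trees.\<close>
definition proper_tree :: "('a set \<Rightarrow> nat) \<Rightarrow> 'a ugraph \<Rightarrow> bool" where
  "proper_tree c T \<longleftrightarrow> (\<forall>e1\<in>edges T. \<forall>e2\<in>edges T.
      e1 \<noteq> e2 \<and> e1 \<inter> e2 \<noteq> {} \<longrightarrow> c e1 \<noteq> c e2)"

definition kl_proper_colouring ::
  "nat \<Rightarrow> nat \<Rightarrow> 'a ugraph \<Rightarrow> nat \<Rightarrow> ('a set \<Rightarrow> nat) \<Rightarrow> bool" where
  "kl_proper_colouring k l G m c \<longleftrightarrow> c ` edges G \<subseteq> {..<m} \<and>
     (\<forall>S. S \<subseteq> verts G \<and> card S = k \<longrightarrow>
        (\<exists>T. int_disjoint_S_trees G S l T \<and> (\<forall>i<l. proper_tree c (T i))))"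

text \<open>The (k,l)-proper index (meaningful when 2 <= k <= |V(G)| and 1 <= l <= kappa_k(G)).\<close>
definition px :: "nat \<Rightarrow> nat \<Rightarrow> 'a ugraph \<Rightarrow> nat" where
  "px k l G = (LEAST m. \<exists>c. kl_proper_colouring k l G m c)"

definition K_nn :: "nat \<Rightarrow> nat ugraph" where
  "K_nn n = ({..<2 * n}, {{i, j} | i j. i < n \<and> n \<le> j \<and> j < 2 * n})"

end

theory Submission
  imports Defs
begin


definition pg :: "'a list \<Rightarrow> 'a ugraph" where
  "pg xs = (set xs, {{xs!i, xs!Suc i} | i. Suc i < length xs})"

lemma verts_pg[simp]: "verts (pg xs) = set xs" by (simp add: pg_def verts_def)
lemma edges_pg: "edges (pg xs) = {{xs!i, xs!Suc i} | i. Suc i < length xs}"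
  by (simp add: pg_def edges_def)

lemma pg_reach:
  assumes "i < length xs"
  shows "(xs!0, xs!i) \<in> {(x, y). {x, y} \<in> edges (pg xs)}\<^sup>*
       \<and> (xs!i, xs!0) \<in> {(x, y). {x, y} \<in> edges (pg xs)}\<^sup>*"
  using assms
proof (induction i)
  case 0 then show ?case by simp
next
  case (Suc i)
  have e1: "{xs!i, xs!Suc i} \<in> edges (pg xs)" using Suc.prems by (auto simp: edges_pg)
  have e2: "{xs!Suc i, xs!i} \<in> edges (pg xs)" using e1 by (simp add: insert_commute)
  have IH: "(xs!0, xs!i) \<in> {(x, y). {x, y} \<in> edges (pg xs)}\<^sup>*
       \<and> (xs!i, xs!0) \<in> {(x, y). {x, y} \<in> edges (pg xs)}\<^sup>*" using Suc by simp
  show ?case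
  proof
    show "(xs!0, xs!Suc i) \<in> {(x, y). {x, y} \<in> edges (pg xs)}\<^sup>*"
    proof (rule rtrancl.rtrancl_into_rtrancl)
      show "(xs!0, xs!i) \<in> {(x, y). {x, y} \<in> edges (pg xs)}\<^sup>*" using IH by (rule conjunct1)
      show "(xs!i, xs!Suc i) \<in> {(x, y). {x, y} \<in> edges (pg xs)}" using e1 by simp
    qed
    show "(xs!Suc i, xs!0) \<in> {(x, y). {x, y} \<in> edges (pg xs)}\<^sup>*"
    proof (rule converse_rtrancl_into_rtrancl)
      show "(xs!i, xs!0) \<in> {(x, y). {x, y} \<in> edges (pg xs)}\<^sup>*" using IH by (rule conjunct2)
      show "(xs!Suc i, xs!i) \<in> {(x, y). {x, y} \<in> edges (pg xs)}" using e2 by simp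
    qed
  qed
qed

lemma pg_connected: "xs \<noteq> [] \<Longrightarrow> connected_graph (pg xs)"
  unfolding connected_graph_def
proof (intro conjI ballI)
  fix u v assume "xs \<noteq> []" "u \<in> verts (pg xs)" "v \<in> verts (pg xs)"
  then obtain i j where "i < length xs" "u = xs!i" "j < length xs" "v = xs!j"
    by (auto simp: in_set_conv_nth)
  then show "(u, v) \<in> {(x, y). {x, y} \<in> edges (pg xs)}\<^sup>*"
    using pg_reach[of i xs] pg_reach[of j xs] rtrancl_trans[of u "xs!0" _ v] by blast
qed simp

lemma pg_edge_idx:
  assumes d: "distinct xs" and e: "{a, b} \<in> edges (pg xs)"
  shows "\<exists>p q. p < length xs \<and> q < length xs \<and> a = xs!p \<and> b = xs!q \<and> (p = Suc q \<or> q = Suc p)"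
proof -
  obtain j where j: "Suc j < length xs" "{a,b} = {xs!j, xs!Suc j}" using e by (auto simp: edges_pg)
  then have "(a = xs!j \<and> b = xs!Suc j) \<or> (a = xs!Suc j \<and> b = xs!j)"
    by (metis doubleton_eq_iff)
  then show ?thesis using j by (metis Suc_lessD)
qed

definition pos :: "'a list \<Rightarrow> 'a \<Rightarrow> nat" where
  "pos xs v = (SOME p. p < length xs \<and> xs!p = v)"

lemma pos: "v \<in> set xs \<Longrightarrow> pos xs v < length xs \<and> xs!(pos xs v) = v"
  unfolding pos_def by (rule someI_ex) (simp add: in_set_conv_nth)

lemma pos_nth: "distinct xs \<Longrightarrow> p < length xs \<Longrightarrow> pos xs (xs!p) = p"
  using pos[of "xs!p" xs] nth_eq_iff_index_eq[of xs "pos xs (xs!p)" p] by simp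

lemma pg_adj_pos:
  assumes d: "distinct xs" and e: "{a, b} \<in> edges (pg xs)"
  shows "pos xs a = Suc (pos xs b) \<or> pos xs b = Suc (pos xs a)"
  using pg_edge_idx[OF assms] pos_nth[OF d] by auto

lemma pg_acyclic:
  assumes d: "distinct xs"
  shows "\<not> has_cycle (pg xs)"
proof
  assume "has_cycle (pg xs)"
  then obtain vs where L: "length vs \<ge> 3" and dv: "distinct vs" and sv: "set vs \<subseteq> set xs"
    and cyc: "\<forall>i < length vs. {vs ! i, vs ! ((i + 1) mod length vs)} \<in> edges (pg xs)"
    unfolding has_cycle_def by auto
  define L where "L = length vs"
  define M where "M = Max (pos xs ` set vs)"
  have "M \<in> pos xs ` set vs" unfolding M_def using L by (intro Max_in) auto
  then obtain i where i: "i < L" "pos xs (vs!i) = M" by (auto simp: in_set_conv_nth L_def)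
  have le: "\<And>v. v \<in> set vs \<Longrightarrow> pos xs v \<le> M" unfolding M_def by simp
  have L0: "0 < L" using L unfolding L_def by linarith
  define a where "a = vs!((i+1) mod L)"
  define i' where "i' = (if i = 0 then L - 1 else i - 1)"
  have i'L: "i' < L"
  proof (cases "i = 0")
    case True then show ?thesis using L0 unfolding i'_def by simp
  next
    case False
    then have "i' = i - 1" unfolding i'_def by simp
    then show ?thesis using i(1) by linarith
  qed
  have i1: "(i+1) mod L = (if i + 1 = L then 0 else i + 1)" using i by auto
  have i'i: "(i' + 1) mod L = i"
  proof (cases "i = 0")
    case True
    then have "i' + 1 = L" using L0 i'_def by simp
    then show ?thesis using True by simp
  next
    case False
    then have "i' + 1 = i" using i'_def by simp
    then show ?thesis using i by simp
  qed
  have ea: "{vs!i, a} \<in> edges (pg xs)" using cyc i by (simp add: a_def L_def)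
  have "{vs!i', vs!((i' + 1) mod L)} \<in> edges (pg xs)" using cyc i'L by (simp add: L_def)
  then have eb: "{vs!i', vs!i} \<in> edges (pg xs)" by (simp only: i'i)
  have ia: "(i+1) mod L < L" by (rule mod_less_divisor[OF L0])
  then have aset: "a \<in> set vs" unfolding a_def using L_def by simp
  have bset: "vs!i' \<in> set vs" using i'L L_def by simp
  have vi: "vs!i \<in> set vs" using i L_def by simp
  have pa: "Suc (pos xs a) = M" using pg_adj_pos[OF d ea] le[OF aset] i by auto
  have pb: "Suc (pos xs (vs!i')) = M" using pg_adj_pos[OF d eb] le[OF bset] i by auto
  have pe: "pos xs a = pos xs (vs!i')" using pa pb by simp
  have "a = xs ! pos xs a" using pos[of a xs] aset sv by auto
  also have "\<dots> = xs ! pos xs (vs!i')" using pe by simp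
  also have "\<dots> = vs!i'" using pos[of "vs!i'" xs] bset sv by auto
  finally have "a = vs!i'" .
  then have eq: "(i+1) mod L = i'" unfolding a_def using i'L L_def ia
    nth_eq_iff_index_eq[OF dv, of "(i+1) mod L" i'] by simp
  show False
  proof (cases "i = 0")
    case True
    then show False using eq i1 i'_def L L_def by simp
  next
    case False
    then show False using eq i1 i'_def L L_def i by (cases "i + 1 = L") simp_all
  qed
qed

lemma pg_proper:
  assumes d: "distinct xs"
    and h: "\<And>t. Suc (Suc t) < length xs \<Longrightarrow> c {xs!t, xs!Suc t} \<noteq> c {xs!Suc t, xs!Suc (Suc t)}"
  shows "proper_tree c (pg xs)"
  unfolding proper_tree_def
proof (intro ballI impI)
  fix e1 e2 assume e1: "e1 \<in> edges (pg xs)" and e2: "e2 \<in> edges (pg xs)" and ne: "e1 \<noteq> e2 \<and> e1 \<inter> e2 \<noteq> {}"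
  obtain p where p: "Suc p < length xs" "e1 = {xs!p, xs!Suc p}" using e1 by (auto simp: edges_pg)
  obtain q where q: "Suc q < length xs" "e2 = {xs!q, xs!Suc q}" using e2 by (auto simp: edges_pg)
  have "p \<noteq> q" using ne p q by auto
  obtain z where "z \<in> e1" "z \<in> e2" using ne by auto
  then obtain a b where ab: "a \<in> {p, Suc p}" "b \<in> {q, Suc q}" "xs!a = xs!b" using p q by auto
  have "a = b" using ab p q nth_eq_iff_index_eq[OF d, of a b] by auto
  then have "q = Suc p \<or> p = Suc q" using ab \<open>p \<noteq> q\<close> by auto
  then show "c e1 \<noteq> c e2"
  proof
    assume "q = Suc p" then show ?thesis using h[of p] p q by auto
  next
    assume "p = Suc q" then show ?thesis using h[of q] p q by auto
  qed
qed

lemma pg_subgraph: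
  assumes "set xs \<subseteq> verts G" "\<And>t. Suc t < length xs \<Longrightarrow> {xs!t, xs!Suc t} \<in> edges G"
  shows "subgraph (pg xs) G"
  using assms unfolding subgraph_def by (auto simp: edges_pg)

lemma pg_S_tree:
  assumes "distinct xs" "S \<subseteq> set xs" "xs \<noteq> []" "set xs \<subseteq> verts G"
    "\<And>t. Suc t < length xs \<Longrightarrow> {xs!t, xs!Suc t} \<in> edges G"
  shows "S_tree G S (pg xs)"
  unfolding S_tree_def tree_in_def
  using pg_subgraph[of xs G, OF assms(4,5)] pg_connected[OF assms(3)] pg_acyclic[OF assms(1)] assms(2) by simp

lemma inj_into:
  assumes "finite A" "M \<le> card A"
  shows "\<exists>g. inj_on g {..<M} \<and> g ` {..<M} \<subseteq> A"
proof -
  obtain h where h: "bij_betw h {0..<card A} A" using ex_bij_betw_nat_finite[OF assms(1)] by blast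
  have sub: "{..<M} \<subseteq> {0..<card A}" using assms(2) by auto
  have "inj_on h {..<M}" using h sub unfolding bij_betw_def by (blast intro: inj_on_subset)
  moreover have "h ` {..<M} \<subseteq> A" using h sub unfolding bij_betw_def by blast
  ultimately show ?thesis by blast
qed



definition cls :: "nat \<Rightarrow> nat \<Rightarrow> nat" where
  "cls n v = (if v < n then 0 else 1) + 2 * (v mod 2)"

definition ev :: "nat \<Rightarrow> nat \<Rightarrow> nat \<Rightarrow> nat" where
  "ev n r j = (if even r then 2*j + r div 2 else 2*((n+1) div 2 + j) + r div 2)"

definition col :: "nat set \<Rightarrow> nat" where
  "col e = (\<Sum>x\<in>e. x) mod 2"

lemma cls_lt4: "cls n v < 4"
proof -
  have "v mod 2 < 2" by simp
  then have "2*(v mod 2) \<le> 2" by linarith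
  then show ?thesis unfolding cls_def by simp
qed
lemma cls_mod2: "cls n v mod 2 = (if v < n then 0 else 1)" by (simp add: cls_def)
lemma cls_div2: "cls n v div 2 = v mod 2" by (simp add: cls_def)

lemma ev_props:
  assumes "r < 4" "j < n div 2 - 1"
  shows "ev n r j < 2*n \<and> cls n (ev n r j) = r"
proof -
  define m where "m = n div 2"
  define p where "p = (n + 1) div 2"
  have m: "2*m \<le> n" "n \<le> 2*m+1" unfolding m_def by linarith+
  have p: "n \<le> 2*p" "2*p \<le> n+1" unfolding p_def by linarith+
  have j: "j + 1 < m" using assms(2) unfolding m_def by linarith
  have "r = 0 \<or> r = 1 \<or> r = 2 \<or> r = 3" using assms(1) by linarith
  then show ?thesis
  proof (elim disjE)
    assume r: "r = 0"
    have "ev n r j = 2*j" unfolding ev_def r by simp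
    moreover have "2*j < n" using m j by linarith
    ultimately show ?thesis unfolding cls_def r by simp
  next
    assume r: "r = 2"
    have "ev n r j = 2*j + 1" unfolding ev_def r by simp
    moreover have "2*j + 1 < n" using m j by linarith
    ultimately show ?thesis unfolding cls_def r by simp
  next
    assume r: "r = 1"
    have "ev n r j = 2*p + 2*j" unfolding ev_def r p_def by simp
    moreover have "2*p + 2*j < 2*n" using m p j by linarith
    moreover have "\<not> 2*p + 2*j < n" using m p j by linarith
    ultimately show ?thesis unfolding cls_def r by simp
  next
    assume r: "r = 3"
    have "ev n r j = 2*p + 2*j + 1" unfolding ev_def r p_def by simp
    moreover have "2*p + 2*j + 1 < 2*n" using m p j by linarith
    moreover have "\<not> 2*p + 2*j + 1 < n" using m p j by linarith
    ultimately show ?thesis unfolding cls_def r by simp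
  qed
qed

lemma ev_inj: "ev n r j = ev n r j' \<Longrightarrow> j = j'"
  unfolding ev_def by (cases "even r") simp_all

lemma col2: "a \<noteq> b \<Longrightarrow> col {a, b} = (a + b) mod 2"
  by (simp add: col_def)


lemma m4a: "(t mod 4) mod 2 \<noteq> (Suc t mod 4) mod (2::nat)"
proof -
  have "(t mod 4) mod 2 = t mod 2" "(Suc t mod 4) mod 2 = Suc t mod 2" by (simp_all add: mod_mod_cancel)
  then show ?thesis by (simp add: mod_Suc)
qed
lemma m4b: "t mod 4 \<noteq> Suc t mod (4::nat)"
  by (simp add: mod_Suc)
lemma m4c: "(t mod 4) div 2 \<noteq> (Suc (Suc t) mod 4) div (2::nat)"
proof -
  have "t mod 4 < 4" by simp
  then have "t mod 4 = 0 \<or> t mod 4 = 1 \<or> t mod 4 = 2 \<or> t mod 4 = 3" by linarith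
  moreover have "Suc (Suc t) mod 4 = (t mod 4 + 2) mod 4" by (simp add: mod_Suc)
  ultimately show ?thesis by auto
qed
lemma par: "(a::nat) mod 2 \<noteq> d mod 2 \<Longrightarrow> (a + b) mod 2 \<noteq> (b + d) mod 2"
  by (auto simp: mod2_eq_if)
lemma m8: "(t::nat) mod 8 < 4 \<Longrightarrow> Suc t div 8 = t div 8 \<and> Suc t mod 8 = Suc (t mod 8)"
  by (simp add: div_Suc mod_Suc)

lemma divmod_aux: "(a::nat) < m \<Longrightarrow> (i*m + a) div m = i \<and> (i*m + a) mod m = a"
  by simp

lemma construction:
  fixes n k l :: nat and S :: "nat set"
  assumes k: "k \<ge> 1" and n: "n \<ge> 4*(k*l) + 2*k + 4" and S: "S \<subseteq> {..<2*n}" "card S = k"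
  shows "\<exists>T. int_disjoint_S_trees (K_nn n) S l T \<and> (\<forall>i<l. proper_tree col (T i))"
proof -
  define J where "J = n div 2 - 1"
  define M where "M = 2*k*l"
  have finS: "finite S" using S(1) finite_subset by blast
  have JM: "M + k \<le> J"
  proof -
    obtain X where X: "X = k*l" by blast
    have "M = 2*X" unfolding M_def X by simp
    then show ?thesis using n unfolding J_def X[symmetric] by presburger
  qed
  define A where "A r = {j. j < J \<and> ev n r j \<notin> S}" for r
  have cardA: "M \<le> card (A r)" for r
  proof -
    define B where "B = {j. j < J \<and> ev n r j \<in> S}"
    have "inj_on (ev n r) B" by (auto intro: inj_onI ev_inj)
    moreover have "ev n r ` B \<subseteq> S" unfolding B_def by auto
    ultimately have cB: "card B \<le> k" using S(2) finS card_inj_on_le by blast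
    have "{..<J} \<subseteq> A r \<union> B" unfolding A_def B_def by auto
    then have "J \<le> card (A r \<union> B)" using card_mono[of "A r \<union> B" "{..<J}"]
      unfolding A_def B_def by auto
    also have "\<dots> \<le> card (A r) + card B" by (rule card_Un_le)
    finally show ?thesis using cB JM by linarith
  qed
  have "\<forall>r. \<exists>g. inj_on g {..<M} \<and> g ` {..<M} \<subseteq> A r"
  proof
    fix r show "\<exists>g. inj_on g {..<M} \<and> g ` {..<M} \<subseteq> A r"
      by (rule inj_into) (use cardA in \<open>auto simp: A_def\<close>)
  qed
  then obtain G where G: "\<And>r. inj_on (G r) {..<M}" "\<And>r. G r ` {..<M} \<subseteq> A r"
    by metis
  define hv where "hv r q = ev n r (G r q)" for r q
  have hv: "hv r q < 2*n \<and> cls n (hv r q) = r \<and> hv r q \<notin> S" if "r < 4" "q < M" for r q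
  proof -
    have "G r q \<in> A r" using G(2) that by auto
    then show ?thesis using ev_props[OF that(1), of "G r q" n] unfolding hv_def A_def J_def by auto
  qed
  have hv_inj: "r = r' \<and> q = q'" if "r < 4" "r' < 4" "q < M" "q' < M" "hv r q = hv r' q'" for r r' q q'
  proof -
    have rr: "r = r'" using hv[of r q] hv[of r' q'] that by metis
    then have "G r q = G r q'" using that ev_inj unfolding hv_def by metis
    then show ?thesis using rr G(1)[of r] that by (auto dest: inj_onD)
  qed
  obtain s where s: "bij_betw s {..<k} S"
    using ex_bij_betw_nat_finite[OF finS] S(2) by (metis atLeast0LessThan)
  have sS: "b < k \<Longrightarrow> s b \<in> S" for b using s by (auto simp: bij_betw_def)
  have s_inj: "b < k \<Longrightarrow> b' < k \<Longrightarrow> s b = s b' \<Longrightarrow> b = b'" for b b'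
    using s by (auto simp: bij_betw_def dest: inj_onD)
  define X where "X i t = (if t mod 8 = cls n (s (t div 8)) then s (t div 8)
                           else hv (t mod 4) (i*(2*k) + t div 4))" for i t
  have qM: "i*(2*k) + t div 4 < M" if "i < l" "t < 8*k" for i t
  proof -
    have "t div 4 < 2*k" using that by linarith
    moreover have "(i+1)*(2*k) \<le> l*(2*k)" using that by (intro mult_le_mono1) simp
    ultimately show ?thesis unfolding M_def by (simp add: algebra_simps)
  qed
  have tdiv: "t div 8 < k" if "t < 8*k" for t using that by linarith
  have X1: "X i t < 2*n \<and> cls n (X i t) = t mod 4" if "i < l" "t < 8*k" for i t
  proof (cases "t mod 8 = cls n (s (t div 8))")
    case True
    have "s (t div 8) \<in> S" using sS tdiv that by blast
    moreover have "t mod 4 = t mod 8" using True cls_lt4[of n "s (t div 8)"] by presburger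
    ultimately show ?thesis using True S(1) unfolding X_def by auto
  next
    case False
    then show ?thesis using hv[of "t mod 4" "i*(2*k) + t div 4"] qM[OF that] unfolding X_def by simp
  qed
  have X2: "t mod 8 = cls n (s (t div 8))" if "i < l" "t < 8*k" "X i t \<in> S" for i t
    using that hv[of "t mod 4" "i*(2*k) + t div 4"] qM[OF that(1,2)] unfolding X_def
    by (auto split: if_splits)
  have X3: "t = t' \<and> (i = i' \<or> X i t \<in> S)"
    if "i < l" "i' < l" "t < 8*k" "t' < 8*k" "X i t = X i' t'" for i i' t t'
  proof (cases "X i t \<in> S")
    case True
    then have a: "t mod 8 = cls n (s (t div 8))" using X2 that by blast
    have "X i' t' \<in> S" using True that by simp
    then have b: "t' mod 8 = cls n (s (t' div 8))" using X2 that by blast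
    have "s (t div 8) = s (t' div 8)" using that a b unfolding X_def by simp
    then have "t div 8 = t' div 8" using s_inj tdiv that by blast
    moreover have "t mod 8 = t' mod 8" using a b calculation by simp
    ultimately have "t = t'" using div_mult_mod_eq[of t 8] div_mult_mod_eq[of t' 8] by linarith
    then show ?thesis using True by simp
  next
    case False
    have a: "t mod 8 \<noteq> cls n (s (t div 8))"
    proof
      assume "t mod 8 = cls n (s (t div 8))"
      then have "X i t \<in> S" using sS[OF tdiv[OF that(3)]] unfolding X_def by simp
      with False show False by simp
    qed
    have "X i' t' \<notin> S" using False that by simp
    have b: "t' mod 8 \<noteq> cls n (s (t' div 8))"
    proof
      assume "t' mod 8 = cls n (s (t' div 8))"
      then have "X i' t' \<in> S" using sS[OF tdiv[OF that(4)]] unfolding X_def by simp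
      with \<open>X i' t' \<notin> S\<close> show False by simp
    qed
    have "hv (t mod 4) (i*(2*k) + t div 4) = hv (t' mod 4) (i'*(2*k) + t' div 4)"
      using a b that unfolding X_def by simp
    moreover have r4: "t mod 4 < 4" "t' mod 4 < 4" by simp_all
    ultimately have hh: "t mod 4 = t' mod 4 \<and> i*(2*k) + t div 4 = i'*(2*k) + t' div 4"
      using hv_inj[OF r4 qM[OF that(1,3)] qM[OF that(2,4)]] by blast
    have lt: "t div 4 < 2*k" "t' div 4 < 2*k" using that by linarith+
    have "i = i' \<and> t div 4 = t' div 4"
      using divmod_aux[OF lt(1), of i] divmod_aux[OF lt(2), of i'] hh by metis
    then show ?thesis using hh div_mult_mod_eq[of t 4] div_mult_mod_eq[of t' 4] by linarith
  qed
  define xs where "xs i = map (X i) [0..<8*k]" for i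
  have len: "length (xs i) = 8*k" for i by (simp add: xs_def)
  have nth: "t < 8*k \<Longrightarrow> xs i ! t = X i t" for i t by (simp add: xs_def)
  have setxs: "set (xs i) = X i ` {..<8*k}" for i by (auto simp: xs_def)
  have dist: "distinct (xs i)" if "i < l" for i
    unfolding xs_def distinct_map using X3 that by (auto intro!: inj_onI)
  have Ssub: "S \<subseteq> set (xs i)" if "i < l" for i
  proof
    fix y assume "y \<in> S"
    then obtain b where b: "b < k" "y = s b" using s by (auto simp: bij_betw_def)
    define t where "t = 8*b + cls n (s b)"
    have t: "t < 8*k" "t div 8 = b" "t mod 8 = cls n (s b)"
      using b cls_lt4[of n "s b"] unfolding t_def by auto
    then have "X i t = y" using b unfolding X_def by simp
    then show "y \<in> set (xs i)" using t setxs by auto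
  qed
  have vK: "verts (K_nn n) = {..<2*n}" by (simp add: K_nn_def verts_def)
  have eK: "edges (K_nn n) = {{i, j} | i j. i < n \<and> n \<le> j \<and> j < 2 * n}"
    by (simp add: K_nn_def edges_def)
  have edgeK: "{X i t, X i (Suc t)} \<in> edges (K_nn n)" if "i < l" "Suc t < 8*k" for i t
  proof -
    have t8: "t < 8*k" using that(2) by linarith
    have a: "X i t < 2*n" "cls n (X i t) = t mod 4" using X1[OF that(1) t8] by simp_all
    have b: "X i (Suc t) < 2*n" "cls n (X i (Suc t)) = Suc t mod 4"
      using X1[OF that(1) that(2)] by simp_all
    have "(t mod 4) mod 2 \<noteq> (Suc t mod 4) mod 2" by (rule m4a)
    then have cx: "cls n (X i t) mod 2 \<noteq> cls n (X i (Suc t)) mod 2" using a b by simp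
    have lr: "(X i t < n) \<noteq> (X i (Suc t) < n)"
    proof
      assume "(X i t < n) = (X i (Suc t) < n)"
      then have "cls n (X i t) mod 2 = cls n (X i (Suc t)) mod 2"
        unfolding cls_mod2 by simp
      with cx show False by simp
    qed
    show ?thesis
    proof (cases "X i t < n")
      case True
      then have "n \<le> X i (Suc t)" using lr by simp
      then show ?thesis unfolding eK mem_Collect_eq
        by (intro exI[of _ "X i t"] exI[of _ "X i (Suc t)"] conjI refl True b(1))
    next
      case False
      then have "X i (Suc t) < n" using lr by simp
      moreover have "{X i t, X i (Suc t)} = {X i (Suc t), X i t}" by (rule insert_commute)
      ultimately show ?thesis unfolding eK mem_Collect_eq
        by (intro exI[of _ "X i (Suc t)"] exI[of _ "X i t"] conjI a(1)) (use False in simp_all)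
    qed
  qed
  have colP: "col {X i t, X i (Suc t)} \<noteq> col {X i (Suc t), X i (Suc (Suc t))}"
    if "i < l" "Suc (Suc t) < 8*k" for i t
  proof -
    have t8: "t < 8*k" "Suc t < 8*k" using that(2) by linarith+
    have a: "cls n (X i t) = t mod 4" using X1[OF that(1) t8(1)] by simp
    have b: "cls n (X i (Suc t)) = Suc t mod 4" using X1[OF that(1) t8(2)] by simp
    have c: "cls n (X i (Suc (Suc t))) = Suc (Suc t) mod 4" using X1[OF that(1) that(2)] by simp
    have "t mod 4 \<noteq> Suc t mod 4" "Suc t mod 4 \<noteq> Suc (Suc t) mod 4" by (rule m4b)+
    then have ne: "X i t \<noteq> X i (Suc t)" "X i (Suc t) \<noteq> X i (Suc (Suc t))" using a b c by metis+
    have "(t mod 4) div 2 \<noteq> (Suc (Suc t) mod 4) div 2" by (rule m4c)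
    then have "X i t mod 2 \<noteq> X i (Suc (Suc t)) mod 2"
      using a c cls_div2[of n "X i t"] cls_div2[of n "X i (Suc (Suc t))"] by simp
    then have "(X i t + X i (Suc t)) mod 2 \<noteq> (X i (Suc t) + X i (Suc (Suc t))) mod 2" by (rule par)
    then show ?thesis using ne by (simp add: col2)
  qed
  define T where "T i = pg (xs i)" for i
  have tree: "S_tree (K_nn n) S (T i)" if "i < l" for i
    unfolding T_def
  proof (rule pg_S_tree)
    show "distinct (xs i)" using dist that .
    show "S \<subseteq> set (xs i)" using Ssub that .
    show "xs i \<noteq> []" using len[of i] k by (metis le_zero_eq list.size(3) mult_is_0 not_one_le_zero zero_neq_numeral)
    show "set (xs i) \<subseteq> verts (K_nn n)"
    proof
      fix y assume "y \<in> set (xs i)"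
      then obtain t where "t < 8*k" "y = X i t" unfolding setxs by blast
      then show "y \<in> verts (K_nn n)" using X1[OF that] vK by simp
    qed
    show "{xs i ! t, xs i ! Suc t} \<in> edges (K_nn n)" if "Suc t < length (xs i)" for t
    proof -
      have "Suc t < 8*k" using that len[of i] by simp
      then show ?thesis using edgeK[OF \<open>i < l\<close>] nth[of t i] nth[of "Suc t" i] by simp
    qed
  qed
  have proper: "proper_tree col (T i)" if "i < l" for i
    unfolding T_def
  proof (rule pg_proper)
    show "distinct (xs i)" using dist that .
    show "col {xs i ! t, xs i ! Suc t} \<noteq> col {xs i ! Suc t, xs i ! Suc (Suc t)}"
      if "Suc (Suc t) < length (xs i)" for t
    proof -
      have "Suc (Suc t) < 8*k" using that len[of i] by simp
      then show ?thesis using colP[OF \<open>i < l\<close>] nth[of t i] nth[of "Suc t" i] nth[of "Suc (Suc t)" i]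
        by simp
    qed
  qed
  have vdisj: "verts (T i) \<inter> verts (T j) = S" if "i < l" "j < l" "i \<noteq> j" for i j
  proof
    show "verts (T i) \<inter> verts (T j) \<subseteq> S"
    proof
      fix y assume "y \<in> verts (T i) \<inter> verts (T j)"
      then obtain t t' where tt: "t < 8*k" "t' < 8*k" "y = X i t" "y = X j t'"
        unfolding T_def verts_pg setxs by blast
      then have "X i t = X j t'" by simp
      then show "y \<in> S" using X3[OF that(1,2) tt(1,2)] that(3) tt(3) by blast
    qed
    show "S \<subseteq> verts (T i) \<inter> verts (T j)" using Ssub[OF that(1)] Ssub[OF that(2)] unfolding T_def by simp
  qed

  have edisj: "edges (T i) \<inter> edges (T j) = {}" if "i < l" "j < l" "i \<noteq> j" for i j
  proof (rule ccontr)
    assume "edges (T i) \<inter> edges (T j) \<noteq> {}"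
    then obtain e where e1: "e \<in> edges (T i)" and e2: "e \<in> edges (T j)" by auto
    obtain t where t0: "Suc t < length (xs i)" "e = {xs i ! t, xs i ! Suc t}"
      using e1 unfolding T_def edges_pg by blast
    have t8: "t < 8*k" "Suc t < 8*k" using t0(1) len[of i] by simp_all
    have t: "e = {X i t, X i (Suc t)}" using t0(2) nth[OF t8(1)] nth[OF t8(2)] by simp
    obtain u where u: "Suc u < length (xs j)" "e = {xs j ! u, xs j ! Suc u}"
      using e2 unfolding T_def edges_pg by blast
    have "e \<subseteq> set (xs j)" using u(1) u(2) by auto
    then have "e \<subseteq> verts (T j)" unfolding T_def by simp
    moreover have "e \<subseteq> verts (T i)" using t t8 setxs unfolding T_def by auto
    ultimately have "e \<subseteq> S" using vdisj[OF that] by blast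
    then have "X i t \<in> S" "X i (Suc t) \<in> S" using t by auto
    then have m1: "t mod 8 = cls n (s (t div 8))" and m2: "Suc t mod 8 = cls n (s (Suc t div 8))"
      using X2[OF that(1) t8(1)] X2[OF that(1) t8(2)] by blast+
    have "t mod 8 < 4" "Suc t mod 8 < 4" using m1 m2 cls_lt4 by simp_all
    then have h: "Suc t div 8 = t div 8 \<and> Suc t mod 8 = Suc (t mod 8)" using m8 by blast
    then have "cls n (s (Suc t div 8)) = cls n (s (t div 8))" by simp
    then have "Suc t mod 8 = t mod 8" using m1 m2 by linarith
    then show False using h by linarith
  qed
  have "int_disjoint_S_trees (K_nn n) S l T"
    unfolding int_disjoint_S_trees_def
  proof (intro conjI allI impI)
    fix i assume "i < l" then show "S_tree (K_nn n) S (T i)" by (rule tree)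
  next
    fix i j assume "i < l" "j < l" "i \<noteq> j"
    then show "edges (T i) \<inter> edges (T j) = {}" by (rule edisj)
  next
    fix i j assume "i < l" "j < l" "i \<noteq> j"
    then show "verts (T i) \<inter> verts (T j) = S" by (rule vdisj)
  qed
  moreover have "\<forall>i<l. proper_tree col (T i)" using proper by blast
  ultimately show ?thesis by blast
qed



lemma S_tree_edge:
  assumes "S_tree G S T" "u \<in> S" "v \<in> S" "u \<noteq> v"
  shows "\<exists>y. {u, y} \<in> edges T"
proof -
  have "(u, v) \<in> {(x, y). {x, y} \<in> edges T}\<^sup>*"
    using assms unfolding S_tree_def tree_in_def connected_graph_def by blast
  then show ?thesis using assms(4) by (cases rule: converse_rtranclE) auto
qed

lemma S_tree_sub: "S_tree G S T \<Longrightarrow> edges T \<subseteq> edges G"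
  unfolding S_tree_def tree_in_def subgraph_def by auto

lemma idst_bound:
  assumes T: "int_disjoint_S_trees G S l' T" and fin: "finite (edges G)"
    and uv: "u \<in> S" "v \<in> S" "u \<noteq> v"
  shows "l' \<le> card (edges G)"
proof -
  have tr: "S_tree G S (T i)" if "i < l'" for i
    using T that unfolding int_disjoint_S_trees_def by blast
  have dj: "edges (T i) \<inter> edges (T j) = {}" if "i < l'" "j < l'" "i \<noteq> j" for i j
    using T that unfolding int_disjoint_S_trees_def by blast
  define f where "f i = (SOME e. e \<in> edges (T i))" for i
  have fi: "f i \<in> edges (T i)" if il: "i < l'" for i
  proof -
    obtain y where "{u, y} \<in> edges (T i)" using S_tree_edge[OF tr[OF il] uv] by blast
    then have "\<exists>e. e \<in> edges (T i)" by blast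
    then show ?thesis unfolding f_def by (rule someI_ex)
  qed
  have "inj_on f {..<l'}"
  proof (rule inj_onI)
    fix i j assume ij: "i \<in> {..<l'}" "j \<in> {..<l'}" "f i = f j"
    show "i = j"
    proof (rule ccontr)
      assume "i \<noteq> j"
      moreover have il: "i < l'" "j < l'" using ij(1,2) by simp_all
      ultimately have "edges (T i) \<inter> edges (T j) = {}" using dj by blast
      moreover have "f i \<in> edges (T i)" by (rule fi[OF il(1)])
      moreover have "f i \<in> edges (T j)" unfolding ij(3) by (rule fi[OF il(2)])
      ultimately show False by blast
    qed
  qed
  moreover have "f ` {..<l'} \<subseteq> edges G"
  proof
    fix e assume "e \<in> f ` {..<l'}"
    then obtain i where i: "i < l'" "e = f i" by blast
    have "f i \<in> edges G" using fi[OF i(1)] S_tree_sub[OF tr[OF i(1)]] by blast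
    then show "e \<in> edges G" using i(2) by simp
  qed
  ultimately have "card {..<l'} \<le> card (edges G)" by (rule card_inj_on_le[OF _ _ fin])
  then show ?thesis by simp
qed

lemma two_elems: "card S \<ge> 3 \<Longrightarrow> \<exists>u v w. u \<in> S \<and> v \<in> S \<and> w \<in> S \<and> u \<noteq> v \<and> u \<noteq> w \<and> v \<noteq> w"
proof -
  assume "card S \<ge> 3"
  then obtain T where "T \<subseteq> S" "card T = 3" by (meson obtain_subset_with_card_n)
  then show ?thesis by (auto simp: card_Suc_eq numeral_3_eq_3)
qed

lemma eK: "edges (K_nn n) = {{i, j} | i j. i < n \<and> n \<le> j \<and> j < 2 * n}"
  by (simp add: K_nn_def edges_def)
lemma vK: "verts (K_nn n) = {..<2*n}" by (simp add: K_nn_def verts_def)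

lemma finE: "finite (edges (K_nn n))"
proof -
  have "edges (K_nn n) \<subseteq> Pow {..<2*n}" unfolding eK by auto
  then show ?thesis by (rule finite_subset) simp
qed

lemma K_edge_ne: "{y, z} \<in> edges (K_nn n) \<Longrightarrow> y \<noteq> z"
proof
  assume "{y, z} \<in> edges (K_nn n)" "y = z"
  then obtain a b where ab: "{y} = {a, b}" "a < n" "n \<le> b" unfolding eK by auto
  then have "a = y" "b = y" by (metis insertI1 singletonD insert_commute)+
  then show False using ab by simp
qed

lemma one_colour_false:
  assumes tr: "S_tree (K_nn n) S T" and pr: "proper_tree c T"
    and c0: "\<And>e. e \<in> edges T \<Longrightarrow> c e = 0"
    and S: "u \<in> S" "v \<in> S" "w \<in> S" "u \<noteq> v" "u \<noteq> w" "v \<noteq> w"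
  shows False
proof -
  have sub: "edges T \<subseteq> edges (K_nn n)" by (rule S_tree_sub[OF tr])
  have ne: "y \<noteq> z" if "{y, z} \<in> edges T" for y z using K_edge_ne sub that by blast
  have adj: "e1 = e2" if "e1 \<in> edges T" "e2 \<in> edges T" "e1 \<inter> e2 \<noteq> {}" for e1 e2
  proof (rule ccontr)
    assume "e1 \<noteq> e2"
    then have "c e1 \<noteq> c e2" using pr that unfolding proper_tree_def by blast
    then show False using c0 that by simp
  qed
  define R where "R = {(x, y). {x, y} \<in> edges T}"
  have conn: "(u, x) \<in> R\<^sup>*" if "x \<in> S" for x
    using tr that S(1) unfolding S_tree_def tree_in_def connected_graph_def R_def by blast
  have reach: "x = u \<or> {u, x} \<in> edges T" if "(u, x) \<in> R\<^sup>*" for x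
    using that
  proof (induction rule: rtrancl_induct)
    case base then show ?case by simp
  next
    case (step y z)
    have yz: "{y, z} \<in> edges T" using step(2) unfolding R_def by simp
    show ?case
    proof (cases "y = u")
      case True then show ?thesis using yz by simp
    next
      case False
      then have uy: "{u, y} \<in> edges T" using step(3) by simp
      have "{u, y} \<inter> {y, z} \<noteq> {}" by simp
      then have "{u, y} = {y, z}" using adj uy yz by blast
      moreover have "y \<noteq> z" using ne yz by blast
      ultimately have "z = u" by (metis doubleton_eq_iff)
      then show ?thesis by simp
    qed
  qed
  have e1: "{u, v} \<in> edges T" using reach[OF conn[OF S(2)]] S(4) by auto
  have e2: "{u, w} \<in> edges T" using reach[OF conn[OF S(3)]] S(5) by auto
  have "{u, v} = {u, w}" using adj[OF e1 e2] by simp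
  then show False using S(4,5,6) by (metis doubleton_eq_iff)
qed

theorem theorem3p1:
  fixes k l :: nat
  assumes "k \<ge> 3" and "l \<ge> 1"
  shows "\<exists>N2 > 0. \<forall>n \<ge> N2.
           k \<le> card (verts (K_nn n)) \<and> l \<le> kappa k (K_nn n) \<and> px k l (K_nn n) = 2"
proof (intro exI[of _ "4*(k*l) + 2*k + 4"] conjI allI impI)
  show "0 < 4*(k*l) + 2*k + 4" by simp
  fix n assume n: "4*(k*l) + 2*k + 4 \<le> n"
  have kn: "k \<le> n" using n by linarith
  show "k \<le> card (verts (K_nn n))" using kn by (simp add: vK)
  have cons: "\<exists>T. int_disjoint_S_trees (K_nn n) S l T \<and> (\<forall>i<l. proper_tree col (T i))"
    if "S \<subseteq> verts (K_nn n)" "card S = k" for S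
  proof -
    have k1: "k \<ge> 1" using assms(1) by simp
    have "S \<subseteq> {..<2*n}" using that(1) by (simp add: vK)
    then show ?thesis by (rule construction[OF k1 n _ that(2)])
  qed
  define F where "F S = {l'. \<exists>T. int_disjoint_S_trees (K_nn n) S l' T}" for S
  have lF: "l \<le> Max (F S)" if hS: "S \<subseteq> verts (K_nn n)" "card S = k" for S
  proof -
    have "3 \<le> card S" using hS(2) assms(1) by simp
    then obtain u v w where uv: "u \<in> S" "v \<in> S" "u \<noteq> v" using two_elems[of S] by blast
    have "finite (F S)"
    proof (rule finite_subset)
      show "F S \<subseteq> {..card (edges (K_nn n))}"
        unfolding F_def using idst_bound[OF _ finE uv] by auto
    qed simp
    moreover have "l \<in> F S" unfolding F_def using cons[OF hS] by blast
    ultimately show ?thesis by simp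
  qed
  have kdef: "kappa k (K_nn n) = Min ((\<lambda>S. Max (F S)) ` {S. S \<subseteq> verts (K_nn n) \<and> card S = k})"
    unfolding kappa_def F_def by (simp add: image_def) (metis)
  have finS: "finite {S. S \<subseteq> verts (K_nn n) \<and> card S = k}"
    by (rule finite_subset[of _ "Pow (verts (K_nn n))"]) (auto simp: vK)
  have "{..<k} \<in> {S. S \<subseteq> verts (K_nn n) \<and> card S = k}" using kn by (auto simp: vK)
  then have ne2: "(\<lambda>S. Max (F S)) ` {S. S \<subseteq> verts (K_nn n) \<and> card S = k} \<noteq> {}" by blast
  have fin2: "finite ((\<lambda>S. Max (F S)) ` {S. S \<subseteq> verts (K_nn n) \<and> card S = k})"
    using finS by simp
  show "l \<le> kappa k (K_nn n)" unfolding kdef Min_ge_iff[OF fin2 ne2] using lF by blast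
  have P2: "kl_proper_colouring k l (K_nn n) 2 col"
    unfolding kl_proper_colouring_def
  proof (intro conjI allI impI)
    show "col ` edges (K_nn n) \<subseteq> {..<2}" by (auto simp: col_def)
  next
    fix S assume "S \<subseteq> verts (K_nn n) \<and> card S = k"
    then show "\<exists>T. int_disjoint_S_trees (K_nn n) S l T \<and> (\<forall>i<l. proper_tree col (T i))"
      using cons by blast
  qed
  have notP: "\<not> kl_proper_colouring k l (K_nn n) m c" if "m < 2" for m c
  proof
    assume P: "kl_proper_colouring k l (K_nn n) m c"
    have S0: "{..<k} \<subseteq> verts (K_nn n) \<and> card {..<k} = k" using kn by (auto simp: vK)
    obtain T where T: "int_disjoint_S_trees (K_nn n) {..<k} l T" "\<forall>i<l. proper_tree c (T i)"
      using P S0 unfolding kl_proper_colouring_def by blast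
    have l0: "0 < l" using assms(2) by simp
    have tr: "S_tree (K_nn n) {..<k} (T 0)" using T(1) l0 unfolding int_disjoint_S_trees_def by blast
    have pr: "proper_tree c (T 0)" using T(2) l0 by blast
    have cm: "c ` edges (K_nn n) \<subseteq> {..<m}" using P unfolding kl_proper_colouring_def by blast
    have c0: "c e = 0" if "e \<in> edges (T 0)" for e
    proof -
      have "e \<in> edges (K_nn n)" using S_tree_sub[OF tr] that by blast
      then have "c e < m" using cm by blast
      then show ?thesis using \<open>m < 2\<close> by simp
    qed
    have S3: "0 \<in> {..<k}" "1 \<in> {..<k}" "2 \<in> {..<k}" using assms(1) by auto
    show False using one_colour_false[OF tr pr c0 S3] by simp
  qed
  show "px k l (K_nn n) = 2"
    unfolding px_def
  proof (rule Least_equality)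
    show "\<exists>c. kl_proper_colouring k l (K_nn n) 2 c" using P2 by blast
  next
    fix m assume "\<exists>c. kl_proper_colouring k l (K_nn n) m c"
    then show "2 \<le> m" using notP by (meson not_le)
  qed
qed

end
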